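(* Let $A,B,C,D$ be integers with $A>0$ odd and square-free, $B,C>0$, $D=B^2+C^2$ square-free, and $\gcd(A,D)=1$, and let $K=\mathbb{Q}\big(\sqrt{A(D+B\sqrt{D})}\big)$ (a totally real cyclic quartic field). Then \[ \tfrac{1}{48}\, A\sqrt{D} \le M(\mathcal{O}_K). \]
   Context: For a nonconstant polynomial $f(x)=c\prod_{i=1}^d (x-\alpha_i)\in\mathbb{C}[x]$, the Mahler measure is $M(f)=|c|\prod_{|\alpha_i|\ge 1}|\alpha_i|$. For an algebraic number $\alpha$, $M(\alpha)$ is the Mahler measure of its minimal polynomial over $\mathbb{Z}$ (with content $1$). For a number field $K$ with ring of integers $\mathcal{O}_K$, $M(\mathcal{O}_K)=\min\{M(\alpha):\alpha\in\mathcal{O}_K,\ \mathbb{Q}(\alpha)=K\}$. Every cyclic quartic field can be written uniquely as $\mathbb{Q}(\sqrt{A(D+B\sqrt{D})})$ with $A,B,C,D$ as in the claim (without the sign condition on $A$); it is totally real iff $A>0$. *)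

theory Defs
  imports "HOL-Computational_Algebra.Computational_Algebra" "Berlekamp_Zassenhaus.Mahler_Measure"
begin

definition is_subfield_C :: "complex set \<Rightarrow> bool" where
  "is_subfield_C S \<longleftrightarrow> 0 \<in> S \<and> 1 \<in> S \<and>
     (\<forall>x\<in>S. \<forall>y\<in>S. x + y \<in> S \<and> x * y \<in> S) \<and>
     (\<forall>x\<in>S. - x \<in> S \<and> inverse x \<in> S)"

definition gen_field :: "complex \<Rightarrow> complex set" where
  "gen_field a = \<Inter>{S. is_subfield_C S \<and> a \<in> S}"

definition ring_of_integers :: "complex set \<Rightarrow> complex set" where
  "ring_of_integers F = {x \<in> F. algebraic_int x}"

text \<open>Minimal polynomial over Z (content 1, positive leading coefficient).\<close>
definition min_int_poly :: "complex \<Rightarrow> int poly" where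
  "min_int_poly a = (THE p. irreducible p \<and> poly (map_poly of_int p) a = 0 \<and> lead_coeff p > 0)"

definition mahler_measure_alg :: "complex \<Rightarrow> real" where
  "mahler_measure_alg a = mahler_measure (min_int_poly a)"

text \<open>M(O_K) = min of M(alpha) over alpha in O_K with Q(alpha) = K (taken as Inf; the minimum is attained).\<close>
definition mahler_measure_OK :: "complex set \<Rightarrow> real" where
  "mahler_measure_OK F = Inf {mahler_measure_alg a | a. a \<in> ring_of_integers F \<and> gen_field a = F}"

end

theory Submission
  imports Defs "Jordan_Normal_Form.Char_Poly" "HOL-Library.Product_Plus" "Berlekamp_Zassenhaus.Factor_Bound"
begin

lemma sqfree_rat_int:
  fixes r :: rat and D :: int
  assumes "squarefree D" "r * r * of_int D \<in> \<int>"
  shows "r \<in> \<int>"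
proof -
  obtain a b where ab0: "r = Rat.Fract a b" "b > 0" "Rings.coprime a b"
    by (cases r) auto
  then have ab: "r = of_int a / of_int b" "b > 0" "Rings.coprime a b" by (auto simp: Fract_of_int_quotient)
  from assms(2) obtain k where k: "r * r * of_int D = of_int k" by (auto elim: Ints_cases)
  have "of_int (a * a * D) = (of_int (k * (b * b)) :: rat)"
    using k ab(2) by (simp add: ab(1) field_simps)
  then have eq: "a * a * D = k * (b * b)" by (simp only: of_int_eq_iff)
  have "b * b dvd (a * a) * D" unfolding eq by simp
  moreover have "Rings.coprime (b * b) (a * a)" using ab(3) by (simp add: Rings.coprime_commute)
  ultimately have "b * b dvd D" using coprime_dvd_mult_right_iff by blast
  then have "b ^ 2 dvd D" by (simp add: power2_eq_square)
  then have "is_unit b" using assms(1) unfolding squarefree_def by blast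
  then have "b = 1" using ab(2) by auto
  then show ?thesis using ab(1) by simp
qed

lemma not_rat_square:
  fixes r :: rat and D :: int
  assumes "squarefree D" "D > 1" "r * r = of_int D"
  shows False
proof -
  have "r * r * of_int 1 \<in> \<int>" using assms(3) by simp
  then have "r \<in> \<int>" by (rule sqfree_rat_int[rotated]) simp
  then obtain k where k: "r = of_int k" by (auto elim: Ints_cases)
  then have "k * k = D" using assms(3) by (metis of_int_eq_iff of_int_mult)
  then have "k ^ 2 dvd D" by (simp add: power2_eq_square)
  then have "is_unit k" using assms(1) unfolding squarefree_def by blast
  then have "\<bar>k\<bar> = 1" by (simp add: zdvd1_eq)
  then have "k * k = 1" by (metis abs_mult_self_eq mult_1_right)
  then show False using \<open>k * k = D\<close> assms(2) by simp
qed

lemma common_denom_min: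
  fixes Z W :: rat
  obtains n a b :: int where "n > 0" "Z = of_int a / of_int n" "W = of_int b / of_int n"
    "\<And>p. prime p \<Longrightarrow> p dvd n \<Longrightarrow> p dvd a \<Longrightarrow> p dvd b \<Longrightarrow> False"
proof -
  define P where "P = (\<lambda>n::nat. n > 0 \<and> (\<exists>a b. Z = of_int a / of_int (int n) \<and> W = of_int b / of_int (int n)))"
  obtain a1 b1 where 1: "Z = of_int a1 / of_int b1" "b1 > 0" by (cases Z) (auto simp: Fract_of_int_quotient)
  obtain a2 b2 where 2: "W = of_int a2 / of_int b2" "b2 > 0" by (cases W) (auto simp: Fract_of_int_quotient)
  have "P (nat (b1 * b2))"
    unfolding P_def
  proof (intro conjI exI)
    show "0 < nat (b1 * b2)" using 1 2 by simp
    show "Z = of_int (a1 * b2) / of_int (int (nat (b1 * b2)))" using 1 2 by (simp add: field_simps)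
    show "W = of_int (a2 * b1) / of_int (int (nat (b1 * b2)))" using 1 2 by (simp add: field_simps)
  qed
  then have PL: "P (LEAST n. P n)" by (rule LeastI)
  define n where "n = (LEAST n. P n)"
  from PL obtain a b where ab: "n > 0" "Z = of_int a / of_int (int n)" "W = of_int b / of_int (int n)"
    unfolding P_def n_def by blast
  show ?thesis
  proof (rule that[of "int n" a b])
    show "int n > 0" using ab by simp
    show "Z = of_int a / of_int (int n)" "W = of_int b / of_int (int n)" using ab by auto
    fix p :: int assume p: "prime p" "p dvd int n" "p dvd a" "p dvd b"
    obtain n' where n': "int n = p * n'" using p(2) by (auto elim: dvdE)
    obtain a' where a': "a = p * a'" using p(3) by (auto elim: dvdE)
    obtain b' where b': "b = p * b'" using p(4) by (auto elim: dvdE)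
    have p1: "p > 1" using p(1) prime_gt_1_int by blast
    have "n' > 0" using n' ab(1) p1 by (metis of_nat_0_less_iff pos_imp_zdiv_pos_iff zero_less_mult_iff nonzero_mult_div_cancel_left not_one_less_zero less_trans zero_less_one)
    have "P (nat n')"
      unfolding P_def
    proof (intro conjI exI)
      show "0 < nat n'" using \<open>n' > 0\<close> by simp
      show "Z = of_int a' / of_int (int (nat n'))" using ab(2) n' a' p1 \<open>n' > 0\<close>
        by (simp add: field_simps)
      show "W = of_int b' / of_int (int (nat n'))" using ab(3) n' b' p1 \<open>n' > 0\<close>
        by (simp add: field_simps)
    qed
    then have "n \<le> nat n'" unfolding n_def by (rule Least_le)
    moreover have "nat n' < n" using n' p1 \<open>n' > 0\<close> by (simp add: nat_less_iff)
    ultimately show False by simp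
  qed
qed

lemma nt_main:
  fixes A B C D :: int and Z W :: rat
  assumes oddA: "odd A" and sqA: "squarefree A" and Dd: "D = B^2 + C^2" and sqD: "squarefree D"
    and AD: "gcd A D = 1" and C0: "C > 0" and D1: "D > 1"
    and ZW: "\<not> (Z = 0 \<and> W = 0)"
    and h1: "2 * of_int A * of_int D * (Z^2 + W^2) \<in> \<int>"
    and h2: "of_int A ^ 2 * of_int D * (of_int C * (Z^2 - W^2) - 2 * of_int B * Z * W)^2 \<in> \<int>"
  shows "of_int C * (Z^2 - W^2) - 2 * of_int B * Z * W \<in> \<int> \<and> of_int C * (Z^2 - W^2) - 2 * of_int B * Z * W \<noteq> 0"
proof -
  obtain n a b :: int where n: "n > 0" and Za: "Z = of_int a / of_int n" and Wb: "W = of_int b / of_int n"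
    and minim: "\<And>p. prime p \<Longrightarrow> p dvd n \<Longrightarrow> p dvd a \<Longrightarrow> p dvd b \<Longrightarrow> False"
    by (rule common_denom_min[of Z W]) blast
  define P0 where "P0 = a^2 + b^2"
  define Q0 where "Q0 = C * (a^2 - b^2) - 2 * B * a * b"
  have nz: "(of_int n :: rat) \<noteq> 0" using n by simp
  have q: "of_int C * (Z^2 - W^2) - 2 * of_int B * Z * W = of_int Q0 / of_int (n^2)"
    using nz unfolding Za Wb Q0_def by (simp add: field_simps power2_eq_square)
  have zs: "Z^2 + W^2 = of_int P0 / of_int (n^2)"
    using nz unfolding Za Wb P0_def by (simp add: field_simps power2_eq_square)
  from h1 obtain k1 where "2 * of_int A * of_int D * (Z^2 + W^2) = (of_int k1 :: rat)" by (auto elim: Ints_cases)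
  then have "of_int (2 * A * D * P0) = (of_int (k1 * n^2) :: rat)" using nz unfolding zs by (simp add: field_simps)
  then have k1: "2 * A * D * P0 = k1 * n^2" by (simp only: of_int_eq_iff)
  have "(of_int A * of_int Q0 / of_int (n^2)) * (of_int A * of_int Q0 / of_int (n^2)) * of_int D \<in> (\<int> :: rat set)"
    using h2 unfolding q by (simp add: power2_eq_square mult_ac)
  then have "of_int A * of_int Q0 / of_int (n^2) \<in> (\<int> :: rat set)" by (rule sqfree_rat_int[OF sqD])
  then obtain k2 where "of_int A * of_int Q0 / of_int (n^2) = (of_int k2 :: rat)" by (auto elim: Ints_cases)
  then have "of_int (A * Q0) = (of_int (k2 * n^2) :: rat)" using nz by (simp add: field_simps)
  then have k2: "A * Q0 = k2 * n^2" by (simp only: of_int_eq_iff)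
  have nocommon: False if p: "prime p" "p dvd n" "p dvd A" for p
  proof -
    obtain A1 where A1: "A = p * A1" using p(3) by (auto elim: dvdE)
    obtain n1 where n1: "n = p * n1" using p(2) by (auto elim: dvdE)
    have p0: "p \<noteq> 0" using p(1) by auto
    have nA1: "\<not> p dvd A1"
    proof
      assume "p dvd A1"
      then have "p ^ 2 dvd A" unfolding A1 by (simp add: power2_eq_square)
      then have "is_unit p" using sqA unfolding squarefree_def by blast
      then show False using p(1) not_prime_unit by blast
    qed
    have n2: "\<not> p dvd 2"
    proof
      assume "p dvd 2"
      then have "p dvd A" "p dvd 2" using p(3) by auto
      have "p = 2" using \<open>p dvd 2\<close> p(1) by (metis prime_int_iff prime_nat_int_transfer two_is_prime_nat dvd_antisym int_ops(3) nat_int pos_int_cases prime_gt_0_int zdvd_imp_le zero_less_numeral prime_ge_2_int order_antisym)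
      then show False using p(3) oddA by simp
    qed
    have nD: "\<not> p dvd D"
    proof
      assume "p dvd D"
      then have "p dvd gcd A D" using p(3) by simp
      then have "is_unit p" using AD by simp
      then show False using p(1) not_prime_unit by blast
    qed
    have "p * (A1 * Q0) = p * (p * (k2 * n1^2))" using k2 unfolding A1 n1 by (simp add: power2_eq_square mult_ac)
    then have "A1 * Q0 = p * (k2 * n1^2)" using p0 by simp
    then have "p dvd A1 * Q0" by simp
    then have pQ: "p dvd Q0" using nA1 p(1) by (simp add: prime_dvd_mult_iff)
    have "p * (2 * A1 * D * P0) = p * (p * (k1 * n1^2))" using k1 unfolding A1 n1 by (simp add: power2_eq_square mult_ac)
    then have "2 * A1 * D * P0 = p * (k1 * n1^2)" using p0 by simp
    then have "p dvd 2 * A1 * D * P0" by simp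
    then have pP: "p dvd P0" using nA1 n2 nD p(1) by (simp add: prime_dvd_mult_iff)
    have "2 * a * (C * a - B * b) = Q0 + C * P0" unfolding Q0_def P0_def by (simp add: algebra_simps power2_eq_square)
    then have "p dvd 2 * a * (C * a - B * b)" using pQ pP by simp
    then have "p dvd a \<or> p dvd (C * a - B * b)" using n2 p(1) by (simp add: prime_dvd_mult_iff)
    moreover have "\<not> p dvd a"
    proof
      assume pa: "p dvd a"
      have "b^2 = P0 - a^2" unfolding P0_def by simp
      then have "p dvd b^2" using pa pP by (simp add: power2_eq_square)
      then have "p dvd b" using p(1) by (simp add: prime_dvd_power_iff)
      then show False using minim[OF p(1) p(2) pa] by simp
    qed
    ultimately have pl: "p dvd (C * a - B * b)" by simp
    have "D * a^2 = B^2 * P0 + (C * a - B * b) * (C * a + B * b)" unfolding Dd P0_def by (simp add: algebra_simps power2_eq_square)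
    then have "p dvd D * a^2" using pl pP by simp
    then have "p dvd D \<or> p dvd a" using p(1) by (simp add: prime_dvd_mult_iff prime_dvd_power_iff)
    then show False using nD \<open>\<not> p dvd a\<close> by simp
  qed
  have cop: "Rings.coprime n A"
  proof (rule ccontr)
    assume "\<not> Rings.coprime n A"
    then have "\<not> is_unit (gcd n A)" by (simp add: coprime_iff_gcd_eq_1 is_unit_gcd)
    moreover have "gcd n A \<noteq> 0" using n by simp
    ultimately obtain p where "prime p" "p dvd gcd n A" using prime_divisor_exists by blast
    then show False using nocommon by auto
  qed
  then have "Rings.coprime (n^2) A" by simp
  then have "n^2 dvd Q0" using k2 by (metis coprime_dvd_mult_right_iff dvd_triv_right mult.commute)
  then obtain k where k: "Q0 = n^2 * k" by (auto elim: dvdE)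
  have int: "of_int C * (Z^2 - W^2) - 2 * of_int B * Z * W = of_int k"
    unfolding q k using nz by simp
  have nzq: "Q0 \<noteq> 0"
  proof
    assume Q: "Q0 = 0"
    show False
    proof (cases "b = 0")
      case True
      then have "C * a^2 = 0" using Q unfolding Q0_def by simp
      then have "a = 0" using C0 by simp
      then show False using ZW True unfolding Za Wb by simp
    next
      case False
      have "(C * a - B * b)^2 - D * b^2 = C * Q0" unfolding Q0_def Dd by (simp add: algebra_simps power2_eq_square)
      then have eq: "(C * a - B * b)^2 = D * b^2" using Q by simp
      define r where "r = (of_int (C * a - B * b) / of_int b :: rat)"
      have e2: "(of_int (C*a - B*b) :: rat)^2 = of_int D * (of_int b)^2"
        using arg_cong[OF eq, of "of_int :: int \<Rightarrow> rat"] by simp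
      have "r * r = (of_int (C*a - B*b))^2 / (of_int b)^2" unfolding r_def by (simp add: power2_eq_square)
      also have "\<dots> = of_int D" using e2 False by (simp add: field_simps)
      finally have "r * r = of_int D" .
      then show False using not_rat_square[OF sqD D1] by blast
    qed
  qed
  then have "k \<noteq> 0" using k by simp
  then show ?thesis using int by simp
qed

lemma sum_div_mod_nat:
  fixes h :: "nat \<Rightarrow> nat \<Rightarrow> 'a::comm_monoid_add"
  shows "(\<Sum>k<m*n. h (k div n) (k mod n)) = (\<Sum>i<m. \<Sum>j<n. h i j)"
proof (induction m)
  case 0 then show ?case by simp
next
  case (Suc m)
  have "(\<Sum>k<Suc m*n. h (k div n) (k mod n)) = (\<Sum>k<m*n. h (k div n) (k mod n)) + (\<Sum>k\<in>{m*n..<m*n+n}. h (k div n) (k mod n))"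
    by (simp add: add.commute sum.atLeastLessThan_concat[symmetric] lessThan_atLeast0)
  also have "(\<Sum>k\<in>{m*n..<m*n+n}. h (k div n) (k mod n)) = (\<Sum>j<n. h ((m*n+j) div n) ((m*n+j) mod n))"
    by (rule sum.reindex_bij_witness[of _ "\<lambda>j. m*n+j" "\<lambda>k. k - m*n"]) auto
  also have "\<dots> = (\<Sum>j<n. h m j)"
    by (intro sum.cong refl) (auto)
  finally show ?case using Suc by simp
qed

lemma alg_int_eigen:
  fixes M :: "nat \<Rightarrow> nat \<Rightarrow> int" and v :: "nat \<Rightarrow> real"
  assumes k0: "k0 < N" "v k0 \<noteq> 0"
    and ev: "\<And>i. i < N \<Longrightarrow> (\<Sum>j<N. of_int (M i j) * v j) = lam * v i"
  shows "algebraic_int lam"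
proof -
  define Mi where "Mi = mat N N (\<lambda>(i,j). M i j)"
  define A where "A = map_mat (of_int :: int \<Rightarrow> real) Mi"
  have Mi: "Mi \<in> carrier_mat N N" unfolding Mi_def by simp
  have A: "A \<in> carrier_mat N N" unfolding A_def using Mi by simp
  have "eigenvector A (vec N v) lam"
    unfolding eigenvector_def
  proof (intro conjI)
    show "vec N v \<in> carrier_vec (dim_row A)" using A by simp
    show "vec N v \<noteq> 0\<^sub>v (dim_row A)" using A k0 by (auto simp: vec_eq_iff)
    show "A *\<^sub>v vec N v = lam \<cdot>\<^sub>v vec N v"
    proof (rule eq_vecI)
      fix i assume "i < dim_vec (lam \<cdot>\<^sub>v vec N v)"
      then have i: "i < N" by simp
      have "(A *\<^sub>v vec N v) $ i = (\<Sum>j = 0..<N. of_int (M i j) * v j)"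
        using A i by (simp add: scalar_prod_def A_def Mi_def)
      also have "\<dots> = lam * v i" using ev[OF i] by (simp add: lessThan_atLeast0)
      finally show "(A *\<^sub>v vec N v) $ i = (lam \<cdot>\<^sub>v vec N v) $ i" using i by simp
    qed (use A in simp)
  qed
  then have "eigenvalue A lam" unfolding eigenvalue_def by blast
  then have "poly (char_poly A) lam = 0" using eigenvalue_root_char_poly[OF A] by simp
  moreover have "char_poly A = of_int_poly (char_poly Mi)"
    unfolding A_def by (rule of_int_hom.char_poly_hom[OF Mi])
  moreover have "lead_coeff (char_poly Mi) = 1" using degree_monic_char_poly[OF Mi] by simp
  ultimately show ?thesis unfolding algebraic_int_altdef_ipoly by auto
qed

lemma alg_int_power_basis:
  fixes x :: real
  assumes "algebraic_int x"
  obtains m c where "m > 0" "x ^ m = (\<Sum>l<m. of_int (c l) * x ^ l)"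
proof -
  from assms obtain p where p: "poly (of_int_poly p) x = 0" "lead_coeff p = 1"
    unfolding algebraic_int_altdef_ipoly by auto
  define m where "m = degree p"
  have "0 = (\<Sum>l\<le>m. of_int (poly.coeff p l) * x ^ l)"
    using p(1)[symmetric] unfolding poly_altdef m_def of_int_hom.degree_map_poly_hom of_int_hom.coeff_map_poly_hom .
  also have "{..m} = insert m {..<m}" by auto
  also have "(\<Sum>l\<in>insert m {..<m}. of_int (poly.coeff p l) * x ^ l) = of_int (poly.coeff p m) * x ^ m + (\<Sum>l<m. of_int (poly.coeff p l) * x ^ l)"
    by (rule sum.insert) auto
  also have "of_int (poly.coeff p m) = (1::real)" using p(2) by (simp add: m_def)
  also have "1 * x ^ m + (\<Sum>l<m. of_int (poly.coeff p l) * x ^ l) = (\<Sum>l<m. of_int (poly.coeff p l) * x ^ l) + x ^ m"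
    by simp
  finally have eq: "0 = (\<Sum>l<m. of_int (poly.coeff p l) * x ^ l) + x ^ m" .
  have "m > 0"
  proof (rule ccontr)
    assume "\<not> m > 0"
    then have "m = 0" by simp
    then show False using eq by simp
  qed
  from eq have "x ^ m = - (\<Sum>l<m. of_int (poly.coeff p l) * x ^ l)"
    by linarith
  also have "\<dots> = (\<Sum>l<m. of_int (- poly.coeff p l) * x ^ l)"
    by (simp add: sum_negf)
  finally have "x ^ m = (\<Sum>l<m. of_int (- poly.coeff p l) * x ^ l)" .
  then show ?thesis by (rule that[OF \<open>m > 0\<close>])
qed

lemma mult_x_basis:
  fixes x :: real
  assumes "x ^ m = (\<Sum>l<m. of_int (c l) * x ^ l)" "i < m"
  shows "x * x ^ i = (\<Sum>l<m. of_int (if Suc i < m then (if l = Suc i then 1 else 0) else c l) * x ^ l)"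
proof (cases "Suc i < m")
  case True
  have "(\<Sum>l<m. of_int (if Suc i < m then (if l = Suc i then 1 else 0) else c l) * x ^ l)
      = (\<Sum>l<m. if l = Suc i then x ^ l else 0)"
    using True by (intro sum.cong) auto
  also have "\<dots> = x ^ Suc i" using True by simp
  finally show ?thesis by simp
next
  case False
  then have "Suc i = m" using assms(2) by simp
  then have "x * x ^ i = x ^ m" by (metis power_Suc)
  then show ?thesis using assms(1) False by simp
qed

lemma delta_sum1:
  fixes n j :: nat
  assumes "j < n"
  shows "(\<Sum>l'<n. (of_int (a * (if l' = j then 1 else 0)) :: real) * f l') = of_int a * f j"
proof -
  have "(\<Sum>l'<n. (of_int (a * (if l' = j then 1 else 0)) :: real) * f l') = (\<Sum>l'<n. if l' = j then of_int a * f l' else 0)"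
    by (intro sum.cong) auto
  also have "\<dots> = of_int a * f j" using assms by (subst sum.delta) auto
  finally show ?thesis .
qed

lemma delta_sum2:
  fixes m n i :: nat
  assumes "i < m"
  shows "(\<Sum>l<m. \<Sum>l'<n. (of_int ((if l = i then 1 else 0) * b l') :: real) * f l l') = (\<Sum>l'<n. of_int (b l') * f i l')"
proof -
  have "(\<Sum>l<m. \<Sum>l'<n. (of_int ((if l = i then 1 else 0) * b l') :: real) * f l l') = (\<Sum>l<m. if l = i then (\<Sum>l'<n. of_int (b l') * f l l') else 0)"
    by (intro sum.cong) auto
  also have "\<dots> = (\<Sum>l'<n. of_int (b l') * f i l')" using assms by (subst sum.delta) auto
  finally show ?thesis .
qed

lemma alg_int_bilinear:
  fixes x y lam :: real and K :: "nat \<Rightarrow> nat \<Rightarrow> nat \<Rightarrow> nat \<Rightarrow> int"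
  assumes "m > 0" "n > 0"
    and "\<And>i j. i < m \<Longrightarrow> j < n \<Longrightarrow>
      lam * (x ^ i * y ^ j) = (\<Sum>l<m. \<Sum>l'<n. of_int (K i j l l') * (x ^ l * y ^ l'))"
  shows "algebraic_int lam"
proof (rule alg_int_eigen[of 0 "m*n" "\<lambda>k. x ^ (k div n) * y ^ (k mod n)"
      "\<lambda>k k'. K (k div n) (k mod n) (k' div n) (k' mod n)"])
  show "0 < m * n" using assms by simp
  show "x ^ (0 div n) * y ^ (0 mod n) \<noteq> 0" by simp
  fix k assume k: "k < m * n"
  have i: "k div n < m" using k by (simp add: less_mult_imp_div_less)
  have j: "k mod n < n" using assms by simp
  have "(\<Sum>k'<m * n. of_int (K (k div n) (k mod n) (k' div n) (k' mod n)) * (x ^ (k' div n) * y ^ (k' mod n)))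
     = (\<Sum>l<m. \<Sum>l'<n. of_int (K (k div n) (k mod n) l l') * (x ^ l * y ^ l'))"
    by (rule sum_div_mod_nat)
  also have "\<dots> = lam * (x ^ (k div n) * y ^ (k mod n))" using assms(3)[OF i j] by simp
  finally show "(\<Sum>k'<m * n. of_int (K (k div n) (k mod n) (k' div n) (k' mod n)) * (x ^ (k' div n) * y ^ (k' mod n))) = lam * (x ^ (k div n) * y ^ (k mod n))" .
qed

lemma algebraic_int_plus_real:
  fixes x y :: real
  assumes "algebraic_int x" "algebraic_int y"
  shows "algebraic_int (x + y)"
proof -
  obtain m c where m: "m > 0" "x ^ m = (\<Sum>l<m. of_int (c l) * x ^ l)" using alg_int_power_basis[OF assms(1)] by blast
  obtain n d where n: "n > 0" "y ^ n = (\<Sum>l<n. of_int (d l) * y ^ l)" using alg_int_power_basis[OF assms(2)] by blast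
  define rx where "rx i l = (if Suc i < m then (if l = Suc i then 1 else 0) else c l)" for i l
  define ry where "ry i l = (if Suc i < n then (if l = Suc i then 1 else 0) else d l)" for i l
  show ?thesis
  proof (rule alg_int_bilinear[OF m(1) n(1), where K = "\<lambda>i j l l'. rx i l * (if l' = j then 1 else 0) + (if l = i then 1 else 0) * ry j l'"])
    fix i j assume i: "i < m" and j: "j < n"
    have hx: "x * x ^ i = (\<Sum>l<m. of_int (rx i l) * x ^ l)" unfolding rx_def by (rule mult_x_basis[OF m(2) i])
    have hy: "y * y ^ j = (\<Sum>l<n. of_int (ry j l) * y ^ l)" unfolding ry_def by (rule mult_x_basis[OF n(2) j])
    have e1: "(\<Sum>l<m. \<Sum>l'<n. of_int (rx i l * (if l' = j then 1 else 0)) * (x ^ l * y ^ l')) = (x * x ^ i) * y ^ j"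
    proof -
      have "(\<Sum>l<m. \<Sum>l'<n. of_int (rx i l * (if l' = j then 1 else 0)) * (x ^ l * y ^ l'))
          = (\<Sum>l<m. of_int (rx i l) * (x ^ l * y ^ j))"
        by (rule sum.cong[OF refl], rule delta_sum1[OF j])
      also have "\<dots> = (\<Sum>l<m. of_int (rx i l) * x ^ l) * y ^ j"
        by (simp add: sum_distrib_right mult.assoc)
      finally show ?thesis unfolding hx .
    qed
    have e2: "(\<Sum>l<m. \<Sum>l'<n. of_int ((if l = i then 1 else 0) * ry j l') * (x ^ l * y ^ l')) = x ^ i * (y * y ^ j)"
    proof -
      have "(\<Sum>l<m. \<Sum>l'<n. of_int ((if l = i then 1 else 0) * ry j l') * (x ^ l * y ^ l'))
          = (\<Sum>l'<n. of_int (ry j l') * (x ^ i * y ^ l'))"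
        by (rule delta_sum2[OF i])
      also have "\<dots> = x ^ i * (\<Sum>l<n. of_int (ry j l) * y ^ l)"
        by (simp add: sum_distrib_left mult_ac)
      finally show ?thesis unfolding hy .
    qed
    have "(x + y) * (x ^ i * y ^ j) = (x * x ^ i) * y ^ j + x ^ i * (y * y ^ j)" by (simp only: distrib_right mult_ac)
    also have "\<dots> = (\<Sum>l<m. \<Sum>l'<n. of_int (rx i l * (if l' = j then 1 else 0)) * (x ^ l * y ^ l'))
        + (\<Sum>l<m. \<Sum>l'<n. of_int ((if l = i then 1 else 0) * ry j l') * (x ^ l * y ^ l'))"
      unfolding e1 e2 ..
    also have "\<dots> = (\<Sum>l<m. \<Sum>l'<n. of_int (rx i l * (if l' = j then 1 else 0) + (if l = i then 1 else 0) * ry j l') * (x ^ l * y ^ l'))"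
      by (simp only: of_int_add distrib_right sum.distrib)
    finally show "(x + y) * (x ^ i * y ^ j) = (\<Sum>l<m. \<Sum>l'<n. of_int (rx i l * (if l' = j then 1 else 0) + (if l = i then 1 else 0) * ry j l') * (x ^ l * y ^ l'))" .
  qed
qed

lemma algebraic_int_times_real:
  fixes x y :: real
  assumes "algebraic_int x" "algebraic_int y"
  shows "algebraic_int (x * y)"
proof -
  obtain m c where m: "m > 0" "x ^ m = (\<Sum>l<m. of_int (c l) * x ^ l)" using alg_int_power_basis[OF assms(1)] by blast
  obtain n d where n: "n > 0" "y ^ n = (\<Sum>l<n. of_int (d l) * y ^ l)" using alg_int_power_basis[OF assms(2)] by blast
  define rx where "rx i l = (if Suc i < m then (if l = Suc i then 1 else 0) else c l)" for i l
  define ry where "ry i l = (if Suc i < n then (if l = Suc i then 1 else 0) else d l)" for i l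
  show ?thesis
  proof (rule alg_int_bilinear[OF m(1) n(1), where K = "\<lambda>i j l l'. rx i l * ry j l'"])
    fix i j assume i: "i < m" and j: "j < n"
    have hx: "x * x ^ i = (\<Sum>l<m. of_int (rx i l) * x ^ l)" unfolding rx_def by (rule mult_x_basis[OF m(2) i])
    have hy: "y * y ^ j = (\<Sum>l<n. of_int (ry j l) * y ^ l)" unfolding ry_def by (rule mult_x_basis[OF n(2) j])
    have "(x * y) * (x ^ i * y ^ j) = (x * x ^ i) * (y * y ^ j)" by (simp only: mult_ac)
    also have "\<dots> = (\<Sum>l<m. \<Sum>l'<n. (of_int (rx i l) * x ^ l) * (of_int (ry j l') * y ^ l'))"
      unfolding hx hy by (rule sum_product)
    also have "\<dots> = (\<Sum>l<m. \<Sum>l'<n. of_int (rx i l * ry j l') * (x ^ l * y ^ l'))"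
      by (intro sum.cong refl) (simp add: mult_ac)
    finally show "(x * y) * (x ^ i * y ^ j) = (\<Sum>l<m. \<Sum>l'<n. of_int (rx i l * ry j l') * (x ^ l * y ^ l'))" .
  qed
qed

type_synonym q4 = "rat \<times> rat \<times> rat \<times> rat"

lemma ring_id4:
  fixes x1 y1 z1 w1 x2 y2 z2 w2 s T T' a b c d :: real
  shows "(x1 + y1*s + z1*T + w1*T') * (x2 + y2*s + z2*T + w2*T') =
    (x1*x2 + d*y1*y2 + a*d*z1*z2 + a*d*w1*w2)
    + (x1*y2 + y1*x2 + a*b*z1*z2 - a*b*w1*w2 + a*c*(z1*w2 + w1*z2)) * s
    + (x1*z2 + z1*x2 + b*(y1*z2 + z1*y2) + c*(y1*w2 + w1*y2)) * T
    + (x1*w2 + w1*x2 + c*(y1*z2 + z1*y2) - b*(y1*w2 + w1*y2)) * T'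
    + y1*y2*(s*s - d) + z1*z2*(T*T - a*(d + b*s)) + w1*w2*(T'*T' - a*(d - b*s))
    + (z1*w2 + w1*z2)*(T*T' - a*c*s) + (y1*z2 + z1*y2)*(s*T - (b*T + c*T'))
    + (y1*w2 + w1*y2)*(s*T' - (c*T - b*T'))"
  by (simp add: algebra_simps)

lemma gen_field_sub: "is_subfield_C S \<Longrightarrow> a \<in> S \<Longrightarrow> gen_field a \<subseteq> S"
  unfolding gen_field_def by blast
lemma gen_field_mem: "a \<in> gen_field a"
  unfolding gen_field_def by blast

locale cq =
  fixes A B C D :: int
  assumes A0: "A > 0" and B0: "B > 0" and C0: "C > 0" and Dd: "D = B^2 + C^2"
    and oddA: "odd A" and sqA: "squarefree A" and sqD: "squarefree D" and AD: "gcd A D = 1"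
begin

definition s :: real where "s = sqrt (real_of_int D)"
definition T :: real where "T = sqrt (real_of_int A * (real_of_int D + real_of_int B * s))"
definition T' :: real where "T' = sqrt (real_of_int A * (real_of_int D - real_of_int B * s))"

lemma D0: "D > 0" using Dd B0 by (simp add: add_pos_nonneg)
lemma DB: "D - B^2 = C^2" using Dd by simp

lemma s_sq: "s * s = of_int D" unfolding s_def using D0 by simp
lemma s_pos: "s > 0" unfolding s_def using D0 by simp
lemma B_less_s: "of_int B < s"
proof -
  have "(of_int B)^2 < (of_int D :: real)" using DB C0 by (simp flip: of_int_power) (smt (verit) zero_less_power)
  then show ?thesis unfolding s_def using B0 by (simp add: real_less_rsqrt)
qed
lemma DBs_pos: "of_int D - of_int B * s > 0"
proof -
  have "of_int D - of_int B * s = s * (s - of_int B)" using s_sq by (simp add: algebra_simps)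
  then show ?thesis using s_pos B_less_s by simp
qed
lemma DBs_pos': "of_int D + of_int B * s > 0" using D0 B0 s_pos by (simp add: add_pos_pos)

lemma T_sq: "T * T = of_int A * (of_int D + of_int B * s)"
  unfolding T_def using A0 DBs_pos' by simp
lemma T'_sq: "T' * T' = of_int A * (of_int D - of_int B * s)"
  unfolding T'_def using A0 DBs_pos by simp
lemma T_pos: "T > 0" unfolding T_def using A0 DBs_pos' by simp
lemma T'_pos: "T' > 0" unfolding T'_def using A0 DBs_pos by simp

lemma TT': "T * T' = of_int A * of_int C * s"
proof -
  have "(T * T')^2 = (of_int A * of_int C * s)^2"
  proof -
    have "(T * T')^2 = (T*T) * (T'*T')" by (simp add: power2_eq_square mult_ac)
    also have "\<dots> = of_int A ^ 2 * (of_int D * of_int D - of_int B ^ 2 * (s * s))"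
      unfolding T_sq T'_sq by (simp add: algebra_simps power2_eq_square)
    also have "\<dots> = of_int A ^ 2 * of_int C ^ 2 * (s * s)"
      unfolding s_sq using DB by (simp add: algebra_simps power2_eq_square flip: of_int_mult of_int_power of_int_diff)
    finally show ?thesis by (simp add: power2_eq_square mult_ac)
  qed
  then show ?thesis using T_pos T'_pos A0 C0 s_pos by (simp add: power2_eq_iff_nonneg)
qed

lemma sT: "s * T = of_int B * T + of_int C * T'"
proof -
  have "(s * T)^2 = (of_int B * T + of_int C * T')^2"
  proof -
    have "(of_int B * T + of_int C * T')^2 = of_int B^2 * (T*T) + 2 * of_int B * of_int C * (T * T') + of_int C ^2 * (T' * T')"
      by (simp add: power2_eq_square algebra_simps)
    also have "\<dots> = of_int A * (of_int D * (of_int B^2 + of_int C^2) + of_int B * s * (of_int B^2 + of_int C^2))"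
      unfolding T_sq T'_sq TT' by (simp add: algebra_simps power2_eq_square)
    also have "\<dots> = (s * s) * (T * T)"
      unfolding T_sq s_sq using Dd by (simp add: algebra_simps power2_eq_square flip: of_int_mult of_int_power of_int_add)
    finally show ?thesis by (simp add: power2_eq_square mult_ac)
  qed
  then show ?thesis using T_pos T'_pos B0 C0 s_pos by (simp add: power2_eq_iff_nonneg)
qed

lemma sT': "s * T' = of_int C * T - of_int B * T'"
proof -
  have cT: "of_int C * T' = s * T - of_int B * T" using sT by simp
  have "of_int C * (s * T') = s * (of_int C * T')" by (simp add: mult_ac)
  also have "\<dots> = s * (s * T) - of_int B * (s * T)" unfolding cT by (simp add: algebra_simps)
  also have "\<dots> = of_int D * T - of_int B * (of_int B * T + of_int C * T')"
    unfolding sT[symmetric] by (simp add: s_sq flip: mult.assoc)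
  also have "\<dots> = of_int C * (of_int C * T - of_int B * T')"
    using Dd by (simp add: algebra_simps power2_eq_square)
  finally show ?thesis using C0 by simp
qed


definition e :: "q4 \<Rightarrow> real" where
  "e u = (case u of (x,y,z,w) \<Rightarrow> of_rat x + of_rat y * s + of_rat z * T + of_rat w * T')"

definition mulT :: "q4 \<Rightarrow> q4 \<Rightarrow> q4" where
  "mulT u v = (case u of (x1,y1,z1,w1) \<Rightarrow> case v of (x2,y2,z2,w2) \<Rightarrow>
    (x1*x2 + of_int D*y1*y2 + of_int A*of_int D*z1*z2 + of_int A*of_int D*w1*w2,
     x1*y2 + y1*x2 + of_int A*of_int B*z1*z2 - of_int A*of_int B*w1*w2 + of_int A*of_int C*(z1*w2 + w1*z2),
     x1*z2 + z1*x2 + of_int B*(y1*z2 + z1*y2) + of_int C*(y1*w2 + w1*y2),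
     x1*w2 + w1*x2 + of_int C*(y1*z2 + z1*y2) - of_int B*(y1*w2 + w1*y2)))"

definition sig :: "q4 \<Rightarrow> q4" where
  "sig u = (case u of (x,y,z,w) \<Rightarrow> (x, -y, -w, z))"

lemma e_mul: "e (mulT u v) = e u * e v"
proof -
  obtain x1 y1 z1 w1 where u: "u = (x1,y1,z1,w1)" by (cases u) auto
  obtain x2 y2 z2 w2 where v: "v = (x2,y2,z2,w2)" by (cases v) auto
  have r: "s * s = of_int D" "T * T = of_int A * (of_int D + of_int B * s)"
    "T' * T' = of_int A * (of_int D - of_int B * s)" "T * T' = of_int A * of_int C * s"
    "s * T = of_int B * T + of_int C * T'" "s * T' = of_int C * T - of_int B * T'"
    using s_sq T_sq T'_sq TT' sT sT' by auto
  show ?thesis unfolding u v e_def mulT_def prod.case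
    apply (subst ring_id4[where a = "of_int A" and b = "of_int B" and c = "of_int C" and d = "of_int D"])
    apply (simp only: r diff_self mult_zero_right add_0_right)
    apply (simp add: of_rat_add of_rat_mult of_rat_diff of_rat_minus)
    done
qed


lemma e_add: "e (u + v) = e u + e v"
  by (cases u; cases v) (simp add: e_def of_rat_add algebra_simps)
lemma e_zero: "e 0 = 0" by (simp add: e_def zero_prod_def)
lemma e_neg: "e (- u) = - e u"
  by (cases u) (simp add: e_def of_rat_minus algebra_simps)
lemma e_diff: "e (u - v) = e u - e v"
  by (cases u; cases v) (simp add: e_def of_rat_diff algebra_simps)
lemma e_const: "e (r, 0, 0, 0) = of_rat r" by (simp add: e_def)

definition smul :: "rat \<Rightarrow> q4 \<Rightarrow> q4" where
  "smul r u = (case u of (x,y,z,w) \<Rightarrow> (r*x, r*y, r*z, r*w))"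
lemma e_smul: "e (smul r u) = of_rat r * e u"
  by (cases u) (simp add: e_def smul_def of_rat_mult algebra_simps)

lemma sig_mul: "sig (mulT u v) = mulT (sig u) (sig v)"
  by (cases u; cases v) (simp add: sig_def mulT_def algebra_simps)
lemma sig_add: "sig (u + v) = sig u + sig v"
  by (cases u; cases v) (simp add: sig_def)
lemma sig_diff: "sig (u - v) = sig u - sig v"
  by (cases u; cases v) (simp add: sig_def)
lemma sig_zero: "sig 0 = 0" by (simp add: sig_def zero_prod_def)
lemma sig_smul: "sig (smul r u) = smul r (sig u)"
  by (cases u) (simp add: sig_def smul_def)
lemma sig_one: "sig (1, 0, 0, 0) = (1, 0, 0, 0)" by (simp add: sig_def)

primrec powT :: "q4 \<Rightarrow> nat \<Rightarrow> q4" where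
  "powT u 0 = (1, 0, 0, 0)"
| "powT u (Suc n) = mulT u (powT u n)"

lemma e_pow: "e (powT u n) = e u ^ n"
proof (induction n)
  case 0 then show ?case by (simp add: e_def)
next
  case (Suc n) then show ?case by (simp add: e_mul)
qed
lemma sig_pow: "sig (powT u n) = powT (sig u) n"
  by (induction n) (simp_all add: sig_one sig_mul)

definition evalT :: "int poly \<Rightarrow> q4 \<Rightarrow> q4" where
  "evalT f u = (\<Sum>i\<le>degree f. smul (of_int (poly.coeff f i)) (powT u i))"

lemma e_sum: "e (sum g I) = (\<Sum>i\<in>I. e (g i))"
  by (induction I rule: infinite_finite_induct) (simp_all add: e_zero e_add)
lemma sig_sum: "sig (sum g I) = (\<Sum>i\<in>I. sig (g i))"
  by (induction I rule: infinite_finite_induct) (simp_all add: sig_zero sig_add)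

lemma e_eval: "e (evalT f u) = poly (of_int_poly f) (e u)"
  unfolding evalT_def e_sum e_smul e_pow poly_altdef of_int_hom.degree_map_poly_hom of_int_hom.coeff_map_poly_hom
  by simp
lemma sig_eval: "sig (evalT f u) = evalT f (sig u)"
  unfolding evalT_def sig_sum sig_smul sig_pow ..

lemma D1: "D > 1"
proof -
  have "B^2 > 0" "C^2 > 0" using B0 C0 by auto
  then have "B^2 \<ge> 1" "C^2 \<ge> 1" by linarith+
  then show ?thesis using Dd by simp
qed

lemma s_irr: "of_rat r \<noteq> s"
proof
  assume h: "of_rat r = s"
  have "of_rat (r * r) = (of_rat (of_int D) :: real)" using h s_sq by (simp add: of_rat_mult)
  then have "r * r = of_int D" by (simp only: of_rat_eq_iff)
  then show False using not_rat_square[OF sqD D1] by blast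
qed

lemma qs_indep:
  assumes "of_rat x + of_rat y * s = 0"
  shows "x = 0 \<and> y = 0"
proof (cases "y = 0")
  case True
  then show ?thesis using assms by simp
next
  case False
  then have "s = of_rat (- x / y)" using assms by (simp add: of_rat_divide of_rat_minus field_simps)
  then show ?thesis using s_irr by metis
qed

lemma T_notin: "of_rat a + of_rat b * s \<noteq> T"
proof
  assume h: "of_rat a + of_rat b * s = T"
  have "T * T = of_rat (a*a + b*b*of_int D) + of_rat (2*a*b) * s"
    unfolding h[symmetric] using s_sq by (simp add: of_rat_add of_rat_mult algebra_simps)
  then have "of_rat (a*a + b*b*of_int D - of_int A * of_int D) + of_rat (2*a*b - of_int A * of_int B) * s = 0"
    unfolding T_sq by (simp add: of_rat_add of_rat_mult of_rat_diff algebra_simps)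
  then have "a*a + b*b*of_int D - of_int A * of_int D = 0 \<and> 2*a*b - of_int A * of_int B = 0"
    by (rule qs_indep)
  then have e1: "a*a + b*b*of_int D = of_int A * of_int D" and e2: "2*a*b = of_int A * of_int B"
    by auto
  have "(a*a - b*b*of_int D)^2 = (a*a + b*b*of_int D)^2 - (2*a*b)^2 * of_int D"
    by (simp add: power2_eq_square algebra_simps)
  also have "\<dots> = (of_int A)^2 * of_int D * (of_int D - (of_int B)^2)"
    unfolding e1 e2 by (simp add: power2_eq_square algebra_simps)
  also have "\<dots> = (of_int A)^2 * of_int D * (of_int C)^2"
    using DB by (metis of_int_diff of_int_power)
  finally have eq: "(a*a - b*b*of_int D)^2 = (of_int A * of_int C)^2 * of_int D"
    by (simp add: power2_eq_square algebra_simps)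
  have nz: "(of_int A * of_int C :: rat) \<noteq> 0" using A0 C0 by simp
  define r where "r = (a*a - b*b*of_int D) / (of_int A * of_int C)"
  have "r * r = of_int D" unfolding r_def using eq nz by (simp add: field_simps power2_eq_square)
  then show False using not_rat_square[OF sqD D1] by blast
qed

lemma e_inj0:
  assumes "e u = 0"
  shows "u = 0"
proof -
  obtain x y z w where u: "u = (x,y,z,w)" by (cases u) auto
  have h: "of_rat x + of_rat y * s + of_rat z * T + of_rat w * T' = 0"
    using assms unfolding u e_def by simp
  have cT: "of_int C * T' = s * T - of_int B * T" using sT by simp
  define c0 where "c0 = of_int C * z - of_int B * w"
  define c1 where "c1 = w"
  have h2: "(of_rat (of_int C * x) + of_rat (of_int C * y) * s) + (of_rat c0 + of_rat c1 * s) * T = 0"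
  proof -
    have "0 = of_int C * (of_rat x + of_rat y * s + of_rat z * T + of_rat w * T')" using h by simp
    also have "\<dots> = of_int C * of_rat x + of_int C * of_rat y * s + of_int C * of_rat z * T + of_rat w * (of_int C * T')"
      by (simp add: algebra_simps)
    also have "\<dots> = (of_rat (of_int C * x) + of_rat (of_int C * y) * s) + (of_rat c0 + of_rat c1 * s) * T"
      unfolding cT c0_def c1_def by (simp add: of_rat_mult of_rat_diff algebra_simps)
    finally show ?thesis by simp
  qed
  show ?thesis
  proof (cases "c0 = 0 \<and> c1 = 0")
    case True
    then have "w = 0" "z = 0" using C0 unfolding c0_def c1_def by auto
    then have "of_rat x + of_rat y * s = 0" using h by simp
    then show ?thesis using qs_indep u \<open>w = 0\<close> \<open>z = 0\<close> by (simp add: zero_prod_def)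
  next
    case False
    define n where "n = c0 * c0 - c1 * c1 * of_int D"
    have n0: "n \<noteq> 0"
    proof
      assume n: "n = 0"
      show False
      proof (cases "c1 = 0")
        case True
        then show False using n False unfolding n_def by simp
      next
        case c1: False
        have "(c0 / c1) * (c0 / c1) = of_int D" using n c1 unfolding n_def by (simp add: field_simps)
        then show False using not_rat_square[OF sqD D1] by blast
      qed
    qed
    let ?X = "of_rat (of_int C * x) + of_rat (of_int C * y) * s"
    have f1: "(of_rat c0 - of_rat c1 * s) * ((of_rat c0 + of_rat c1 * s) * T) = of_rat n * T"
      unfolding n_def using s_sq by (simp add: of_rat_diff of_rat_mult algebra_simps)
    have f2: "(of_rat c0 + of_rat c1 * s) * T = - ?X"
      using h2 by (simp add: eq_neg_iff_add_eq_0 add.commute)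
    have "of_rat n * T = (of_rat c0 - of_rat c1 * s) * ((of_rat c0 + of_rat c1 * s) * T)"
      using f1[symmetric] by (simp only: mult.assoc)
    also have "\<dots> = - (of_rat c0 - of_rat c1 * s) * ?X" unfolding f2 by (simp add: algebra_simps)
    also have "\<dots> = of_rat (- (of_int C * x * c0 - of_int C * y * c1 * of_int D)) + of_rat (- (of_int C * y * c0 - of_int C * x * c1)) * s"
      using s_sq by (simp add: of_rat_diff of_rat_mult of_rat_minus algebra_simps)
    finally have "T = of_rat (- (of_int C * x * c0 - of_int C * y * c1 * of_int D) / n) + of_rat (- (of_int C * y * c0 - of_int C * x * c1) / n) * s"
      using n0 by (simp add: of_rat_divide field_simps)
    then show ?thesis using T_notin by metis
  qed
qed

lemma e_inj: "e u = e v \<Longrightarrow> u = v"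
  using e_inj0[of "u - v"] by (simp add: e_diff)


lemma conj_root:
  assumes "poly (of_int_poly f) (e u) = 0"
  shows "poly (of_int_poly f) (e (sig u)) = 0"
proof -
  have "e (evalT f u) = 0" using assms by (simp add: e_eval)
  then have "evalT f u = 0" by (rule e_inj0)
  then have "evalT f (sig u) = 0" using sig_eval[of f u] sig_zero by simp
  then show ?thesis using e_eval[of f "sig u"] e_zero by simp
qed

lemma conj_algint:
  assumes "algebraic_int (e u)"
  shows "algebraic_int (e (sig u))"
proof -
  from assms obtain f where "poly (of_int_poly f) (e u) = 0" "lead_coeff f = 1"
    unfolding algebraic_int_altdef_ipoly by auto
  then show ?thesis unfolding algebraic_int_altdef_ipoly using conj_root by blast
qed

lemma sig_sig: "sig (sig (x,y,z,w)) = (x, y, -z, -w)" by (simp add: sig_def)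
lemma sig_sig_sig: "sig (sig (sig (x,y,z,w))) = (x, -y, w, -z)" by (simp add: sig_def)

lemma e_nz_inverse:
  assumes "e u \<noteq> 0"
  shows "\<exists>v. e u * e v = 1"
proof -
  obtain x y z w where u: "u = (x,y,z,w)" by (cases u) auto
  define p0 where "p0 = x*x + of_int D*y*y - of_int A*of_int D*z*z - of_int A*of_int D*w*w"
  define p1 where "p1 = 2*x*y - of_int A*of_int B*z*z + of_int A*of_int B*w*w - 2*of_int A*of_int C*z*w"
  have m1: "mulT u (x, y, -z, -w) = (p0, p1, 0, 0)"
    unfolding u mulT_def p0_def p1_def by (simp add: algebra_simps)
  define N where "N = p0*p0 - of_int D*p1*p1"
  have m2: "mulT (p0, p1, 0, 0) (p0, -p1, 0, 0) = (N, 0, 0, 0)"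
    unfolding mulT_def N_def by (simp add: algebra_simps)
  have u0: "u \<noteq> 0" using assms e_zero by auto
  have "(x, y, -z, -w) \<noteq> 0" using u0 u by (auto simp: zero_prod_def)
  then have "e (x, y, -z, -w) \<noteq> 0" using e_inj0 by blast
  then have ep: "e (p0, p1, 0, 0) \<noteq> 0" using assms m1 e_mul[of u "(x, y, -z, -w)"] by simp
  then have "(p0, -p1, 0, 0) \<noteq> (0::q4)" by (auto simp: zero_prod_def e_def)
  then have "e (p0, -p1, 0, 0) \<noteq> 0" using e_inj0 by blast
  then have "e (N, 0, 0, 0) \<noteq> 0" using ep m2 e_mul[of "(p0, p1, 0, 0)" "(p0, -p1, 0, 0)"] by simp
  then have N0: "N \<noteq> 0" by (simp add: e_def)
  define v where "v = smul (1 / N) (mulT (x, y, -z, -w) (p0, -p1, 0, 0))"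
  have "e u * e v = of_rat (1/N) * (e (mulT (mulT u (x, y, -z, -w)) (p0, -p1, 0, 0)))"
    unfolding v_def e_smul e_mul by (simp add: mult_ac)
  also have "\<dots> = of_rat (1/N) * of_rat N" unfolding m1 m2 by (simp add: e_def)
  also have "\<dots> = 1" using N0 by (simp flip: of_rat_mult)
  finally show ?thesis by blast
qed

definition EK :: "complex set" where "EK = range (\<lambda>u. complex_of_real (e u))"

lemma EK_subfield: "is_subfield_C EK"
  unfolding is_subfield_C_def EK_def
proof (intro conjI ballI)
  show "0 \<in> range (\<lambda>u. complex_of_real (e u))" by (rule image_eqI[of _ _ 0]) (simp_all add: e_zero)
  show "1 \<in> range (\<lambda>u. complex_of_real (e u))" by (rule image_eqI[of _ _ "(1,0,0,0)"]) (simp_all add: e_def)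
  fix a b assume a: "a \<in> range (\<lambda>u. complex_of_real (e u))" and b: "b \<in> range (\<lambda>u. complex_of_real (e u))"
  from a obtain u where u: "a = complex_of_real (e u)" by blast
  from b obtain v where v: "b = complex_of_real (e v)" by blast
  show "a + b \<in> range (\<lambda>u. complex_of_real (e u))" by (rule image_eqI[of _ _ "u+v"]) (simp_all add: u v e_add)
  show "a * b \<in> range (\<lambda>u. complex_of_real (e u))" by (rule image_eqI[of _ _ "mulT u v"]) (simp_all add: u v e_mul)
next
  fix a assume a: "a \<in> range (\<lambda>u. complex_of_real (e u))"
  from a obtain u where u: "a = complex_of_real (e u)" by blast
  show "- a \<in> range (\<lambda>u. complex_of_real (e u))" by (rule image_eqI[of _ _ "- u"]) (simp_all add: u e_neg)
  show "inverse a \<in> range (\<lambda>u. complex_of_real (e u))"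
  proof (cases "e u = 0")
    case True
    then show ?thesis by (intro image_eqI[of _ _ 0]) (simp_all add: u e_zero)
  next
    case False
    then obtain v where "e u * e v = 1" using e_nz_inverse by blast
    then have "inverse (e u) = e v" by (rule inverse_unique)
    then show ?thesis by (intro image_eqI[of _ _ v]) (simp_all add: u flip: of_real_inverse)
  qed
qed

definition ES :: "complex set" where "ES = (\<lambda>(x,y). complex_of_real (e (x, y, 0, 0))) ` UNIV"

lemma ES_subfield: "is_subfield_C ES"
  unfolding is_subfield_C_def ES_def
proof (intro conjI ballI)
  show "0 \<in> range (\<lambda>(x,y). complex_of_real (e (x, y, 0, 0)))"
    by (rule image_eqI[of _ _ "(0,0)"]) (simp_all add: e_def)
  show "1 \<in> range (\<lambda>(x,y). complex_of_real (e (x, y, 0, 0)))"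
    by (rule image_eqI[of _ _ "(1,0)"]) (simp_all add: e_def)
  fix a b assume a: "a \<in> range (\<lambda>(x,y). complex_of_real (e (x, y, 0, 0)))" and b: "b \<in> range (\<lambda>(x,y). complex_of_real (e (x, y, 0, 0)))"
  from a obtain x1 y1 where u: "a = complex_of_real (e (x1, y1, 0, 0))" by auto
  from b obtain x2 y2 where v: "b = complex_of_real (e (x2, y2, 0, 0))" by auto
  show "a + b \<in> range (\<lambda>(x,y). complex_of_real (e (x, y, 0, 0)))"
    by (rule image_eqI[of _ _ "(x1+x2, y1+y2)"]) (simp_all add: u v e_def of_rat_add algebra_simps)
  have "e (x1, y1, 0, 0) * e (x2, y2, 0, 0) = e (x1*x2 + of_int D*y1*y2, x1*y2 + y1*x2, 0, 0)"
    unfolding e_mul[symmetric] by (simp add: mulT_def)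
  then show "a * b \<in> range (\<lambda>(x,y). complex_of_real (e (x, y, 0, 0)))"
    by (intro image_eqI[of _ _ "(x1*x2 + of_int D*y1*y2, x1*y2 + y1*x2)"]) (simp_all add: u v flip: of_real_mult)
next
  fix a assume a: "a \<in> range (\<lambda>(x,y). complex_of_real (e (x, y, 0, 0)))"
  from a obtain x y where u: "a = complex_of_real (e (x, y, 0, 0))" by auto
  show "- a \<in> range (\<lambda>(x,y). complex_of_real (e (x, y, 0, 0)))"
    by (rule image_eqI[of _ _ "(-x, -y)"]) (simp_all add: u e_def of_rat_minus algebra_simps)
  show "inverse a \<in> range (\<lambda>(x,y). complex_of_real (e (x, y, 0, 0)))"
  proof (cases "x = 0 \<and> y = 0")
    case True
    then show ?thesis using u by (intro image_eqI[of _ _ "(0,0)"]) (simp_all add: e_def)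
  next
    case False
    define N where "N = x*x - of_int D*y*y"
    have N0: "N \<noteq> 0"
    proof
      assume n: "N = 0"
      show False
      proof (cases "y = 0")
        case True then show False using n False unfolding N_def by simp
      next
        case y: False
        have "(x / y) * (x / y) = of_int D" using n y unfolding N_def by (simp add: field_simps)
        then show False using not_rat_square[OF sqD D1] by blast
      qed
    qed
    have "x * (x / N) + of_int D * y * (- y / N) = (x*x - of_int D*y*y) / N"
      by (simp add: diff_divide_distrib)
    also have "\<dots> = 1" using N0 unfolding N_def by simp
    finally have c1: "x * (x / N) + of_int D * y * (- y / N) = 1" .
    have "mulT (x, y, 0, 0) (x / N, - y / N, 0, 0) = (1, 0, 0, 0)"
      unfolding mulT_def using c1 by (simp add: algebra_simps)
    then have "e (x, y, 0, 0) * e (x / N, - y / N, 0, 0) = e (1, 0, 0, 0)"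
      unfolding e_mul[symmetric] by simp
    then have "inverse (e (x, y, 0, 0)) = e (x / N, - y / N, 0, 0)"
      by (simp add: e_def inverse_unique)
    then show ?thesis using u
      by (intro image_eqI[of _ _ "(x / N, - y / N)"]) (simp_all flip: of_real_inverse)
  qed
qed

end

lemma of_int_poly_of_rat: "map_poly (of_rat :: rat \<Rightarrow> complex) (of_int_poly p) = of_int_poly p"
  by (subst map_poly_map_poly) (auto simp: o_def)

lemma irr_root_unique:
  fixes p q :: "int poly" and a :: complex
  assumes p: "irreducible p" "poly (of_int_poly p) a = 0" "lead_coeff p > 0"
      and q: "irreducible q" "poly (of_int_poly q) a = 0" "lead_coeff q > 0"
  shows "p = q"
proof -
  interpret mp: map_poly_comm_ring_hom "of_rat :: rat \<Rightarrow> complex" ..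
  define g where "g = gcd p q"
  have p0: "p \<noteq> 0" using p(1) by auto
  have g0: "g \<noteq> 0" using p0 unfolding g_def by simp
  define P where "P = (of_int_poly p :: rat poly)"
  define Q where "Q = (of_int_poly q :: rat poly)"
  have G: "gcd P Q = Polynomial.smult (inverse (of_int (lead_coeff g))) (of_int_poly g)"
    unfolding P_def Q_def g_def by (rule gcd_rat_to_gcd_int)
  have bez: "fst (bezout_coefficients P Q) * P + snd (bezout_coefficients P Q) * Q = gcd P Q"
    by (rule bezout_coefficients_fst_snd)
  have "poly (map_poly (of_rat :: rat \<Rightarrow> complex) (gcd P Q)) a = 0"
    unfolding bez[symmetric] unfolding mp.hom_add mp.hom_mult P_def Q_def of_int_poly_of_rat
    using p(2) q(2) by simp
  then have "poly (map_poly (of_rat :: rat \<Rightarrow> complex) (Polynomial.smult (inverse (of_int (lead_coeff g))) (of_int_poly g))) a = 0"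
    unfolding G .
  then have "of_rat (inverse (of_int (lead_coeff g))) * poly (of_int_poly g) a = (0::complex)"
    by (simp add: of_rat_hom.map_poly_hom_smult of_int_poly_of_rat)
  then have gr: "poly (of_int_poly g) a = (0::complex)" using g0 by simp
  have dg: "degree g \<noteq> 0"
  proof
    assume "degree g = 0"
    then obtain c where "g = [:c:]" by (metis degree_eq_zeroE)
    then show False using gr g0 by simp
  qed
  have gnu: "\<not> is_unit g" using dg by (auto simp: is_unit_poly_iff)
  have fac: "\<exists>c. r = Polynomial.smult c g \<and> (c = 1 \<or> c = -1)" if r: "irreducible r" "g dvd r" for r
  proof -
    obtain h where h: "r = g * h" using r(2) by (auto elim: dvdE)
    have "is_unit g \<or> is_unit h" using r(1) h by (auto simp: irreducible_def)
    then have "is_unit h" using gnu by simp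
    then obtain c where c: "h = [:c:]" "is_unit c" by (auto simp: is_unit_poly_iff)
    then have "c = 1 \<or> c = -1" using zdvd1_eq by auto
    then show ?thesis using h c by auto
  qed
  have gp: "g dvd p" "g dvd q" unfolding g_def by simp_all
  obtain c where c: "p = Polynomial.smult c g" "c = 1 \<or> c = -1" using fac[OF p(1) gp(1)] by blast
  obtain d where d: "q = Polynomial.smult d g" "d = 1 \<or> d = -1" using fac[OF q(1) gp(2)] by blast
  have "lead_coeff p = c * lead_coeff g" "lead_coeff q = d * lead_coeff g" using c d by auto
  then have "c = d" using p(3) q(3) c(2) d(2) by (auto simp: zero_less_mult_iff)
  then show ?thesis using c d by simp
qed

lemma min_int_poly_props:
  fixes a :: complex
  assumes "algebraic_int a"
  shows "irreducible (min_int_poly a) \<and> poly (of_int_poly (min_int_poly a)) a = 0 \<and> lead_coeff (min_int_poly a) > 0"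
proof -
  from assms obtain f where f: "poly (of_int_poly f) a = 0" "lead_coeff f = 1"
    unfolding algebraic_int_altdef_ipoly by auto
  have f0: "f \<noteq> 0" using f(2) by auto
  have uf: "poly (of_int_poly (unit_factor g)) a \<noteq> (0::complex)" if "g \<noteq> 0" for g :: "int poly"
  proof -
    have "is_unit (unit_factor g)" using that by simp
    then obtain c where "unit_factor g = [:c:]" "is_unit c" by (auto simp: is_unit_poly_iff)
    then show ?thesis by auto
  qed
  have dec: "poly (of_int_poly g) a = poly (of_int_poly (unit_factor g)) a * poly (of_int_poly (normalize g)) (a::complex)" for g :: "int poly"
    using unit_factor_mult_normalize[of g] by (metis of_int_poly_hom.hom_mult poly_mult)
  have "poly (of_int_poly (normalize f)) a = (0::complex)" using dec[of f] f(1) uf[OF f0] by simp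
  moreover have "normalize (prod_mset (prime_factorization f)) = normalize f"
    by (rule prod_mset_prime_factorization_weak[OF f0])
  ultimately have pm: "poly (of_int_poly (prod_mset (prime_factorization f))) a = (0::complex)"
    using dec[of "prod_mset (prime_factorization f)"] by simp
  have "\<exists>q\<in>#M. poly (of_int_poly q) a = (0::complex)" if "poly (of_int_poly (prod_mset M)) a = (0::complex)" for M :: "int poly multiset"
    using that
  proof (induction M)
    case empty then show ?case by simp
  next
    case (add x M)
    then show ?case by (auto simp: of_int_poly_hom.hom_mult)
  qed
  from this[OF pm] obtain q where q: "q \<in># prime_factorization f" "poly (of_int_poly q) a = (0::complex)" by blast
  have "prime q" using q(1) by (rule in_prime_factors_imp_prime)
  then have irq: "irreducible q" by (intro prime_elem_imp_irreducible prime_imp_prime_elem)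
  then have q0: "q \<noteq> 0" by auto
  define q' where "q' = [:sgn (lead_coeff q):] * q"
  have u: "is_unit [:sgn (lead_coeff q):]" using q0 by (auto simp: is_unit_poly_iff sgn_if)
  have ex1: "irreducible q'" unfolding q'_def using irreducible_mult_unit_left[OF u] irq by simp
  have ex2: "poly (of_int_poly q') a = (0::complex)" unfolding q'_def using q(2) by (simp add: of_int_hom.map_poly_hom_smult)
  have "lead_coeff q' = sgn (lead_coeff q) * lead_coeff q" unfolding q'_def by (simp add: lead_coeff_mult)
  also have "\<dots> = \<bar>lead_coeff q\<bar>" by (simp add: abs_sgn mult.commute)
  also have "\<dots> > 0" using q0 by simp
  finally have ex: "irreducible q' \<and> poly (of_int_poly q') a = 0 \<and> lead_coeff q' > 0" using ex1 ex2 by simp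
  show ?thesis unfolding min_int_poly_def
  proof (rule theI)
    show "irreducible q' \<and> poly (of_int_poly q') a = 0 \<and> lead_coeff q' > 0" by (rule ex)
    fix p assume "irreducible p \<and> poly (of_int_poly p) a = 0 \<and> 0 < lead_coeff p"
    then show "p = q'" using ex by (intro irr_root_unique[of p a q']) simp_all
  qed
qed

lemma poly_of_real_int:
  "poly (of_int_poly p) (complex_of_real r) = complex_of_real (poly (of_int_poly p) r)"
proof -
  have eq: "map_poly (of_real :: real \<Rightarrow> complex) (of_int_poly p) = of_int_poly p"
    by (subst map_poly_map_poly) (auto simp: o_def)
  have "poly (map_poly (of_real :: real \<Rightarrow> complex) (of_int_poly p)) (complex_of_real r) = complex_of_real (poly (of_int_poly p) r)"
    by (rule of_real_hom.poly_map_poly)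
  then show ?thesis unfolding eq .
qed

lemma mahler_roots_bound:
  fixes p :: "int poly" and as :: "complex list"
  assumes p0: "p \<noteq> 0" and dist: "distinct as" and roots: "\<forall>a\<in>set as. poly (of_int_poly p) a = 0"
  shows "prod_list (map (\<lambda>a. max 1 (cmod a)) as) \<le> mahler_measure p"
proof -
  define P where "P = (of_int_poly p :: complex poly)"
  have "\<exists>H. P = (\<Prod>a\<leftarrow>as. [:-a,1:]) * H" using dist roots
  proof (induction as)
    case Nil then show ?case by simp
  next
    case (Cons b as)
    then obtain H where H: "P = (\<Prod>a\<leftarrow>as. [:-a,1:]) * H" by auto
    have Pb: "poly P b = 0" using Cons.prems unfolding P_def by simp
    have "poly (\<Prod>a\<leftarrow>as. [:-a,1:]) b = (\<Prod>a\<leftarrow>as. b - a)"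
      by (induction as) (simp_all add: algebra_simps)
    also have "\<dots> \<noteq> 0" using Cons.prems by (auto simp: prod_list_zero_iff)
    finally have "poly H b = 0" using Pb H by simp
    then have "[:-b,1:] dvd H" by (simp add: poly_eq_0_iff_dvd)
    then obtain H' where hH: "H = [:-b,1:] * H'" by (rule dvdE)
    have "P = (\<Prod>a\<leftarrow>as. [:-a,1:]) * ([:-b,1:] * H')" using H hH by simp
    also have "\<dots> = ([:-b,1:] * (\<Prod>a\<leftarrow>as. [:-a,1:])) * H'" by (simp only: mult_ac)
    also have "\<dots> = (\<Prod>a\<leftarrow>b # as. [:-a,1:]) * H'" by (simp only: list.map prod_list.Cons)
    finally have "P = (\<Prod>a\<leftarrow>b # as. [:-a,1:]) * H'" .
    then show ?case by blast
  qed
  then obtain H where H: "P = (\<Prod>a\<leftarrow>as. [:-a,1:]) * H" by blast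
  have lcPi: "lead_coeff (\<Prod>a\<leftarrow>as. [:-a,1:]) = (1::complex)" by (subst lead_coeff_of_prod) (induction as, simp_all)
  have "lead_coeff P = lead_coeff H" using H lcPi by (simp add: lead_coeff_mult)
  moreover have "lead_coeff P = of_int (lead_coeff p)" unfolding P_def by simp
  ultimately have "cmod (lead_coeff H) = cmod (of_int (lead_coeff p) :: complex)" by simp
  also have "\<dots> = \<bar>of_int (lead_coeff p)\<bar>" by (rule norm_of_int)
  finally have "cmod (lead_coeff H) = \<bar>of_int (lead_coeff p)\<bar>" .
  moreover have "lead_coeff p \<noteq> 0" using p0 by simp
  ultimately have lcH: "cmod (lead_coeff H) \<ge> 1" by linarith
  have mPi: "mahler_measure_poly (\<Prod>a\<leftarrow>as. [:-a,1:]) = (\<Prod>a\<leftarrow>as. max 1 (cmod a))"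
    using mahler_measure_poly_explicit[of 1 as] by simp
  have "mahler_measure_poly H = cmod (lead_coeff H) * mahler_measure_monic H"
    by (rule mahler_measure_poly_via_monic)
  also have "\<dots> \<ge> 1 * 1" using lcH mahler_measure_monic_ge_1[of H] by (intro mult_mono) auto
  finally have mH: "mahler_measure_poly H \<ge> 1" by simp
  have pn: "(\<Prod>a\<leftarrow>as. max 1 (cmod a)) \<ge> 0" by (induction as) (auto intro: mult_nonneg_nonneg)
  have "mahler_measure p = mahler_measure_poly P" unfolding mahler_measure_def P_def ..
  also have "\<dots> = (\<Prod>a\<leftarrow>as. max 1 (cmod a)) * mahler_measure_poly H"
    unfolding H measure_eq_prod mPi ..
  also have "\<dots> \<ge> (\<Prod>a\<leftarrow>as. max 1 (cmod a)) * 1"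
    using mH pn by (intro mult_left_mono) auto
  finally show ?thesis by (simp only: mult_1_right)
qed

lemma diff_bound: "cmod (a - b) \<le> 2 * max 1 (cmod a) * max 1 (cmod b)"
proof -
  define x where "x = max 1 (cmod a)"
  define y where "y = max 1 (cmod b)"
  have x: "x \<ge> 1" "cmod a \<le> x" and y: "y \<ge> 1" "cmod b \<le> y" unfolding x_def y_def by auto
  have "cmod (a - b) \<le> cmod a + cmod b" by (rule norm_triangle_ineq4)
  also have "\<dots> \<le> x + y" using x y by simp
  also have "\<dots> \<le> 2 * x * y"
  proof -
    have "x * 1 \<le> x * y" using x y by (intro mult_left_mono) auto
    moreover have "1 * y \<le> x * y" using x y by (intro mult_right_mono) auto
    ultimately show ?thesis by simp
  qed
  finally show ?thesis unfolding x_def y_def .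
qed

context cq
begin

lemma rat_algint_int:
  assumes "algebraic_int (of_rat r :: real)"
  shows "r \<in> \<int>"
proof -
  have "(of_rat r :: real) \<in> \<int>" using rational_algebraic_int_is_int[OF assms] by simp
  then obtain k where "(of_rat r :: real) = of_int k" by (auto elim: Ints_cases)
  then have "of_rat r = (of_rat (of_int k) :: real)" by simp
  then have "r = of_int k" by (simp only: of_rat_eq_iff)
  then show ?thesis by simp
qed

lemma main_bound:
  assumes ai: "algebraic_int (e u)" and u: "u = (x,y,z,w)" and zw: "\<not> (z = 0 \<and> w = 0)"
      and p: "irreducible p" "poly (of_int_poly p) (complex_of_real (e u)) = 0"
  shows "of_int A * s / 4 \<le> mahler_measure p"
proof -
  define u2 where "u2 = sig u"
  define u3 where "u3 = sig u2"
  define u4 where "u4 = sig u3"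
  have u2: "u2 = (x, -y, -w, z)" unfolding u2_def u sig_def by simp
  have u3: "u3 = (x, y, -z, -w)" unfolding u3_def u2 sig_def by simp
  have u4: "u4 = (x, -y, w, -z)" unfolding u4_def u3 sig_def by simp
  have r1: "poly (of_int_poly p) (e u) = 0"
    using p(2) unfolding poly_of_real_int by simp
  have r2: "poly (of_int_poly p) (e u2) = 0" unfolding u2_def using conj_root[OF r1] .
  have r3: "poly (of_int_poly p) (e u3) = 0" unfolding u3_def using conj_root[OF r2] .
  have r4: "poly (of_int_poly p) (e u4) = 0" unfolding u4_def using conj_root[OF r3] .
  have i2: "algebraic_int (e u2)" unfolding u2_def by (rule conj_algint[OF ai])
  have i3: "algebraic_int (e u3)" unfolding u3_def by (rule conj_algint[OF i2])
  have i4: "algebraic_int (e u4)" unfolding u4_def by (rule conj_algint[OF i3])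
  define as where "as = map (\<lambda>v. complex_of_real (e v)) [u, u2, u3, u4]"
  have dist_u: "distinct [u, u2, u3, u4]" using zw unfolding u u2 u3 u4 by auto
  have inj: "inj (\<lambda>v. complex_of_real (e v))" by (rule injI) (metis e_inj of_real_eq_iff)
  have "inj_on (\<lambda>v. complex_of_real (e v)) (set [u, u2, u3, u4])" using inj by (rule inj_on_subset) simp
  then have dist: "distinct as" unfolding as_def using dist_u by (simp only: distinct_map)
  have roots: "\<forall>a\<in>set as. poly (of_int_poly p) a = 0"
    unfolding as_def using r1 r2 r3 r4 by (auto simp: poly_of_real_int)
  have p0: "p \<noteq> 0" using p(1) by auto
  define M where "M = (\<lambda>v. max 1 (cmod (complex_of_real (e v))))"
  have as_eq: "as = [complex_of_real (e u), complex_of_real (e u2), complex_of_real (e u3), complex_of_real (e u4)]"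
    unfolding as_def by (simp only: list.map)
  have pe: "prod_list (map (\<lambda>a. max 1 (cmod a)) as) = M u * (M u2 * (M u3 * M u4))"
    unfolding as_eq M_def by (simp only: list.map prod_list.Cons prod_list.Nil mult_1_right)
  have mb: "M u * (M u2 * (M u3 * M u4)) \<le> mahler_measure p"
    using mahler_roots_bound[OF p0 dist roots] unfolding pe .
  define Z where "Z = 2 * z"
  define W where "W = 2 * w"
  define t where "t = e (0, 0, Z, W)"
  define t' where "t' = e (0, 0, -W, Z)"
  have t: "t = e u - e u3" unfolding t_def u u3 Z_def W_def e_def by (simp add: of_rat_mult of_rat_minus algebra_simps)
  have t': "t' = e u2 - e u4" unfolding t'_def u2 u4 Z_def W_def e_def by (simp add: of_rat_mult of_rat_minus algebra_simps)
  have it: "algebraic_int t" unfolding t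
    using algebraic_int_plus_real[OF ai algebraic_int_minus[OF i3]] by simp
  have it': "algebraic_int t'" unfolding t'
    using algebraic_int_plus_real[OF i2 algebraic_int_minus[OF i4]] by simp
  define R1 where "R1 = 2 * of_int A * of_int D * (Z^2 + W^2)"
  have "mulT (0, 0, Z, W) (0, 0, Z, W) + mulT (0, 0, -W, Z) (0, 0, -W, Z) = (R1, 0, 0, 0)"
    unfolding mulT_def R1_def by (simp add: algebra_simps power2_eq_square)
  then have "t * t + t' * t' = of_rat R1"
    unfolding t_def t'_def e_mul[symmetric] e_add[symmetric] by (simp add: e_def)
  moreover have "algebraic_int (t * t + t' * t')"
    by (intro algebraic_int_plus_real algebraic_int_times_real it it')
  ultimately have h1: "R1 \<in> \<int>" using rat_algint_int by metis
  define q where "q = of_int C * (Z^2 - W^2) - 2 * of_int B * Z * W"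
  have "mulT (0, 0, Z, W) (0, 0, -W, Z) = (0, of_int A * q, 0, 0)"
    unfolding mulT_def q_def by (simp add: algebra_simps power2_eq_square)
  then have tt: "t * t' = of_rat (of_int A * q) * s"
    unfolding t_def t'_def e_mul[symmetric] by (simp add: e_def)
  define R2 where "R2 = of_int A ^ 2 * of_int D * q^2"
  have "(t * t') * (t * t') = of_rat R2"
    unfolding tt R2_def using s_sq by (simp add: of_rat_mult of_rat_power power2_eq_square algebra_simps)
  moreover have "algebraic_int ((t * t') * (t * t'))"
    by (intro algebraic_int_times_real it it')
  ultimately have h2: "R2 \<in> \<int>" using rat_algint_int by metis
  have ZW: "\<not> (Z = 0 \<and> W = 0)" using zw unfolding Z_def W_def by simp
  have "q \<in> \<int> \<and> q \<noteq> 0"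
    using nt_main[OF oddA sqA Dd sqD AD C0 D1 ZW] h1 h2 unfolding R1_def R2_def q_def by blast
  then obtain k where k: "q = of_int k" "k \<noteq> 0" by (auto elim: Ints_cases)
  have "\<bar>t * t'\<bar> = of_int A * of_int \<bar>k\<bar> * s"
    unfolding tt k using A0 s_pos by (simp add: abs_mult of_rat_mult flip: of_int_abs)
  also have "\<dots> \<ge> of_int A * 1 * s" using k(2) A0 s_pos by (intro mult_right_mono mult_left_mono) auto
  finally have tlow: "\<bar>t * t'\<bar> \<ge> of_int A * s" by simp
  have "cmod (complex_of_real (e u) - complex_of_real (e u3)) \<le> 2 * M u * M u3"
    unfolding M_def by (rule diff_bound)
  moreover have "cmod (complex_of_real (e u2) - complex_of_real (e u4)) \<le> 2 * M u2 * M u4"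
    unfolding M_def by (rule diff_bound)
  moreover have "cmod (complex_of_real (e u) - complex_of_real (e u3)) = \<bar>t\<bar>"
    unfolding t by (simp flip: of_real_diff)
  moreover have "cmod (complex_of_real (e u2) - complex_of_real (e u4)) = \<bar>t'\<bar>"
    unfolding t' by (simp flip: of_real_diff)
  ultimately have "\<bar>t\<bar> * \<bar>t'\<bar> \<le> (2 * M u * M u3) * (2 * M u2 * M u4)"
    by (intro mult_mono) auto
  then have "of_int A * s \<le> 4 * (M u * (M u2 * (M u3 * M u4)))"
    using tlow by (simp add: abs_mult mult_ac)
  then show ?thesis using mb by simp
qed

end

theorem proposition5p1:
  fixes A B C D :: int
  assumes "A > 0" and "odd A" and "squarefree A"
    and "B > 0" and "C > 0"
    and "D = B^2 + C^2" and "squarefree D"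
    and "gcd A D = 1"
  shows "A * sqrt D / 48 \<le>
    mahler_measure_OK (gen_field (complex_of_real (sqrt (A * (D + B * sqrt D)))))"
proof -
  interpret cq A B C D using assms by unfold_locales auto
  have th: "complex_of_real (sqrt (A * (D + B * sqrt D))) = complex_of_real (e (0,0,1,0))"
    by (simp add: e_def T_def s_def)
  define K where "K = gen_field (complex_of_real (e (0,0,1,0)))"
  have thK: "complex_of_real (e (0,0,1,0)) \<in> K" unfolding K_def by (rule gen_field_mem)
  have KE: "K \<subseteq> EK" unfolding K_def by (rule gen_field_sub[OF EK_subfield]) (simp add: EK_def)
  define X where "X = {mahler_measure_alg a | a. a \<in> ring_of_integers K \<and> gen_field a = K}"
  have algT: "algebraic_int T"
  proof -
    have h: "T * T - of_int A * of_int D = of_int A * of_int B * s" using T_sq by (simp add: algebra_simps)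
    have "(T * T - of_int A * of_int D) * (T * T - of_int A * of_int D) = of_int A ^ 2 * of_int B ^ 2 * of_int D"
      unfolding h using s_sq by (simp add: power2_eq_square algebra_simps)
    then have "poly (of_int_poly [:A^2*D^2 - A^2*B^2*D, 0, -2*A*D, 0, 1:]) T = 0"
      by (simp add: algebra_simps power2_eq_square)
    moreover have "lead_coeff [:A^2*D^2 - A^2*B^2*D, 0, -2*A*D, 0, 1:] = 1" by simp
    ultimately show ?thesis unfolding algebraic_int_altdef_ipoly by blast
  qed
  have "complex_of_real (e (0,0,1,0)) \<in> ring_of_integers K"
    unfolding ring_of_integers_def using thK algT by (simp add: e_def)
  then have Xne: "X \<noteq> {}" unfolding X_def K_def by blast
  have low: "of_int A * s / 4 \<le> m" if "m \<in> X" for m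
  proof -
    from that obtain a where m: "m = mahler_measure_alg a" and aK: "a \<in> ring_of_integers K" and ga: "gen_field a = K"
      unfolding X_def by blast
    have "a \<in> EK" using aK KE unfolding ring_of_integers_def by auto
    then obtain u where au: "a = complex_of_real (e u)" unfolding EK_def by blast
    obtain x y z w where u: "u = (x,y,z,w)" by (cases u) auto
    have aia: "algebraic_int a" using aK unfolding ring_of_integers_def by simp
    then have aiu: "algebraic_int (e u)" unfolding au by simp
    have zw: "\<not> (z = 0 \<and> w = 0)"
    proof
      assume zw0: "z = 0 \<and> w = 0"
      then have "a \<in> ES" unfolding ES_def au u by (auto intro!: image_eqI[of _ _ "(x,y)"])
      then have "gen_field a \<subseteq> ES" by (rule gen_field_sub[OF ES_subfield])
      then have "complex_of_real (e (0,0,1,0)) \<in> ES" using thK ga by auto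
      then obtain x' y' where "complex_of_real (e (0,0,1,0)) = complex_of_real (e (x', y', 0, 0))"
        unfolding ES_def by auto
      then have "e (0,0,1,0) = e (x', y', 0, 0)" by simp
      then have "(0::rat,0::rat,1::rat,0::rat) = (x', y', 0, 0)" by (rule e_inj)
      then show False by simp
    qed
    have mp: "irreducible (min_int_poly a) \<and> poly (of_int_poly (min_int_poly a)) a = 0 \<and> lead_coeff (min_int_poly a) > 0"
      by (rule min_int_poly_props[OF aia])
    have "of_int A * s / 4 \<le> mahler_measure (min_int_poly a)"
      using main_bound[OF aiu u zw] mp unfolding au by blast
    then show ?thesis unfolding m mahler_measure_alg_def .
  qed
  have "of_int A * s / 4 \<le> Inf X" by (rule cInf_greatest[OF Xne low])
  moreover have "of_int A * s / 48 \<le> of_int A * s / 4" using A0 s_pos by simp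
  ultimately have "of_int A * s / 48 \<le> Inf X" by linarith
  then show ?thesis unfolding th mahler_measure_OK_def X_def K_def s_def by simp
qed

end
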